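(* Let $G^*=(V,E^* )$ be the true causal DAG and let $G=(V,E)$ be a superstructure for $G^*$. Let $\{S_1,\dots,S_N\}$ be a vertex-covering partition of $V$ (i.e. $\bigcup_i S_i=V$). Then its causal expansion $\{S'_1,\dots,S'_N\}$, where $S'_i=S_i\cup\partial_{\mathrm{out}}(S_i)$, is a causal partition with respect to $G$ and $G^*$.
   Context: Superstructure: an undirected graph $G=(V,E)$ such that every pair of vertices adjacent in $G^*$ is adjacent in $G$. Outer vertex boundary: $\partial_{\mathrm{out}}(S)=\{v\in V\setminus S:\exists u\in S\text{ with } u,v \text{ adjacent in } G\}$. Setting: random variables correspond to the vertices of $G^*$, their joint distribution $P$ factorizes according to $G^*$ and is faithful to it; $X_S$ is the (infinite-sample) data on $S\subseteq V$. A collider on a path is a non-endpoint vertex whose two incident path edges both have an arrowhead at it. For $L\subset V$, an inducing path relative to $L$ between $u$ and $v$ in $G^*$ is a path $(u,q_1,\dots,q_k,v)$ in which every non-endpoint vertex lying in $V\setminus L$ is a collider on the path and an ancestor in $G^*$ of $u$ or $v$. A MAG is a mixed graph (directed and bi-directed edges) with no directed or almost directed cycles and no inducing path between non-adjacent vertices; its Markov equivalence class $[M]$ consists of MAGs with the same $m$-separations, and $PAG[M]$ has the same adjacencies as $M$ with arrowhead/tail marks where shared by all of $[M]$ and circle marks otherwise. The latent MAG $L^{\mathrm{MAG}}(G^*,S)$ on $S$ has $u,v\in S$ adjacent iff there is an inducing path relative to $V\setminus S$ between them in $G^*$, oriented $u\to v$ if $u$ is an ancestor of $v$ in $G^*$,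 $v\to u$ if $v$ is an ancestor of $u$, and $u\leftrightarrow v$ otherwise. Consistent PAG Learner Assumption: $\mathscr{A}$ is a structure learner such that for every $S\subseteq V$, when $P$ is faithful, in the infinite data limit $\mathscr{A}(X_S)=PAG[L^{\mathrm{MAG}}(G^*,S)]$. Causal partition: an overlapping family $\{S'_1,\dots,S'_N\}$ of subsets of $V$ is causal with respect to $G$ and $G^*$ if, for any learner $\mathscr{A}$ satisfying the assumption above: (i) for every edge $\{u,v\}$ of $G$ some $S'_i\supseteq\{u,v\}$; (ii) for any $u,v$ non-adjacent in $G^*$ but adjacent in $G$, there is some $S'_i$ with $u,v\in S'_i$ such that $\mathscr{A}(X_{S'_i})$ has no edge between $u$ and $v$; (iii) for any unshielded collider $u\to v\leftarrow w$ in $G^*$ ($u,w$ non-adjacent) there is some $S'_i$ with $\{u,v,w\}\subseteq S'_i$. *)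

theory Defs
  imports Main
begin

text \<open>A DAG on vertex set V is given by a directed edge relation D (D u v means u -> v).\<close>

definition dag :: "'v set \<Rightarrow> ('v \<Rightarrow> 'v \<Rightarrow> bool) \<Rightarrow> bool" where
  "dag V D \<longleftrightarrow> finite V \<and> (\<forall>u v. D u v \<longrightarrow> u \<in> V \<and> v \<in> V) \<and> (\<forall>u. \<not> D\<^sup>+\<^sup>+ u u)"

definition dag_adj :: "('v \<Rightarrow> 'v \<Rightarrow> bool) \<Rightarrow> 'v \<Rightarrow> 'v \<Rightarrow> bool" where
  "dag_adj D u v \<longleftrightarrow> D u v \<or> D v u"

definition dag_anc :: "('v \<Rightarrow> 'v \<Rightarrow> bool) \<Rightarrow> 'v \<Rightarrow> 'v \<Rightarrow> bool" where
  "dag_anc D a b \<longleftrightarrow> D\<^sup>*\<^sup>* a b"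

definition is_path :: "('v \<Rightarrow> 'v \<Rightarrow> bool) \<Rightarrow> 'v \<Rightarrow> 'v \<Rightarrow> 'v list \<Rightarrow> bool" where
  "is_path adj u v p \<longleftrightarrow> length p \<ge> 2 \<and> distinct p \<and> hd p = u \<and> last p = v \<and>
     (\<forall>i. Suc i < length p \<longrightarrow> adj (p ! i) (p ! Suc i))"

definition dag_collider :: "('v \<Rightarrow> 'v \<Rightarrow> bool) \<Rightarrow> 'v list \<Rightarrow> nat \<Rightarrow> bool" where
  "dag_collider D p i \<longleftrightarrow> 0 < i \<and> Suc i < length p \<and> D (p ! (i - 1)) (p ! i) \<and> D (p ! Suc i) (p ! i)"

definition dag_inducing_path :: "'v set \<Rightarrow> ('v \<Rightarrow> 'v \<Rightarrow> bool) \<Rightarrow> 'v set \<Rightarrow> 'v \<Rightarrow> 'v \<Rightarrow> 'v list \<Rightarrow> bool" where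
  "dag_inducing_path V D L u v p \<longleftrightarrow> is_path (dag_adj D) u v p \<and> set p \<subseteq> V \<and>
     (\<forall>i. 0 < i \<and> Suc i < length p \<longrightarrow> p ! i \<notin> L \<longrightarrow>
        dag_collider D p i \<and> (dag_anc D (p ! i) u \<or> dag_anc D (p ! i) v))"

datatype mark = Tail | Arrow | Circle

text \<open>A mixed graph is represented by its edge-mark function: M u v = Some m means
  u and v are adjacent and the mark at the v-end of the edge is m; M u v = None
  means u and v are not adjacent.\<close>
type_synonym 'v mgraph = "'v \<Rightarrow> 'v \<Rightarrow> mark option"

definition madj :: "'v mgraph \<Rightarrow> 'v \<Rightarrow> 'v \<Rightarrow> bool" where
  "madj M u v \<longleftrightarrow> M u v \<noteq> None"

definition mdir :: "'v mgraph \<Rightarrow> 'v \<Rightarrow> 'v \<Rightarrow> bool" where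
  "mdir M u v \<longleftrightarrow> M u v = Some Arrow \<and> M v u = Some Tail"

definition mbidir :: "'v mgraph \<Rightarrow> 'v \<Rightarrow> 'v \<Rightarrow> bool" where
  "mbidir M u v \<longleftrightarrow> M u v = Some Arrow \<and> M v u = Some Arrow"

definition manc :: "'v mgraph \<Rightarrow> 'v \<Rightarrow> 'v \<Rightarrow> bool" where
  "manc M a b \<longleftrightarrow> (mdir M)\<^sup>*\<^sup>* a b"

definition mixed_graph :: "'v set \<Rightarrow> 'v mgraph \<Rightarrow> bool" where
  "mixed_graph S M \<longleftrightarrow>
     (\<forall>u v. M u v \<noteq> None \<longrightarrow> u \<in> S \<and> v \<in> S \<and> u \<noteq> v) \<and>
     (\<forall>u v. M u v \<noteq> None \<longleftrightarrow> M v u \<noteq> None) \<and>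
     (\<forall>u v. madj M u v \<longrightarrow> mdir M u v \<or> mdir M v u \<or> mbidir M u v)"

definition mcollider :: "'v mgraph \<Rightarrow> 'v list \<Rightarrow> nat \<Rightarrow> bool" where
  "mcollider M p i \<longleftrightarrow> 0 < i \<and> Suc i < length p \<and>
     M (p ! (i - 1)) (p ! i) = Some Arrow \<and> M (p ! Suc i) (p ! i) = Some Arrow"

definition m_inducing_path :: "'v mgraph \<Rightarrow> 'v \<Rightarrow> 'v \<Rightarrow> 'v list \<Rightarrow> bool" where
  "m_inducing_path M u v p \<longleftrightarrow> is_path (madj M) u v p \<and>
     (\<forall>i. 0 < i \<and> Suc i < length p \<longrightarrow> mcollider M p i \<and> (manc M (p ! i) u \<or> manc M (p ! i) v))"

text \<open>Maximal ancestral graph: no directed cycles, no almost directed cycles, and no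
  inducing path between non-adjacent vertices.\<close>
definition mag :: "'v set \<Rightarrow> 'v mgraph \<Rightarrow> bool" where
  "mag S M \<longleftrightarrow> mixed_graph S M \<and>
     (\<forall>u. \<not> (mdir M)\<^sup>+\<^sup>+ u u) \<and>
     (\<forall>u v. mbidir M u v \<longrightarrow> \<not> manc M u v) \<and>
     (\<forall>u v p. u \<noteq> v \<and> \<not> madj M u v \<longrightarrow> \<not> m_inducing_path M u v p)"

definition m_connecting :: "'v mgraph \<Rightarrow> 'v set \<Rightarrow> 'v \<Rightarrow> 'v \<Rightarrow> 'v list \<Rightarrow> bool" where
  "m_connecting M Z u v p \<longleftrightarrow> is_path (madj M) u v p \<and>
     (\<forall>i. 0 < i \<and> Suc i < length p \<longrightarrow>
        (mcollider M p i \<longrightarrow> (\<exists>z\<in>Z. manc M (p ! i) z)) \<and>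
        (\<not> mcollider M p i \<longrightarrow> p ! i \<notin> Z))"

definition m_separated :: "'v mgraph \<Rightarrow> 'v \<Rightarrow> 'v \<Rightarrow> 'v set \<Rightarrow> bool" where
  "m_separated M u v Z \<longleftrightarrow> (\<forall>p. \<not> m_connecting M Z u v p)"

definition markov_equiv :: "'v set \<Rightarrow> 'v mgraph \<Rightarrow> 'v mgraph \<Rightarrow> bool" where
  "markov_equiv S M M' \<longleftrightarrow>
     (\<forall>u v Z. u \<in> S \<and> v \<in> S \<and> u \<noteq> v \<and> Z \<subseteq> S - {u, v} \<longrightarrow>
        (m_separated M u v Z \<longleftrightarrow> m_separated M' u v Z))"

definition pag :: "'v set \<Rightarrow> 'v mgraph \<Rightarrow> 'v mgraph" where
  "pag S M = (\<lambda>u v. case M u v of None \<Rightarrow> None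
     | Some m \<Rightarrow> (if (\<forall>M'. mag S M' \<and> markov_equiv S M M' \<longrightarrow> M' u v = Some m)
                  then Some m else Some Circle))"

definition latent_mag :: "'v set \<Rightarrow> ('v \<Rightarrow> 'v \<Rightarrow> bool) \<Rightarrow> 'v set \<Rightarrow> 'v mgraph" where
  "latent_mag V D S = (\<lambda>u v.
     if u \<in> S \<and> v \<in> S \<and> u \<noteq> v \<and> (\<exists>p. dag_inducing_path V D (V - S) u v p)
     then (if dag_anc D v u then Some Tail else Some Arrow)
     else None)"

text \<open>A structure learner, in the infinite-data limit, is modelled as the map sending a
  variable subset S to the graph it outputs on the data X_S.\<close>
definition consistent_pag_learner :: "'v set \<Rightarrow> ('v \<Rightarrow> 'v \<Rightarrow> bool) \<Rightarrow> ('v set \<Rightarrow> 'v mgraph) \<Rightarrow> bool" where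
  "consistent_pag_learner V D A \<longleftrightarrow> (\<forall>S. S \<subseteq> V \<longrightarrow> A S = pag S (latent_mag V D S))"

definition superstructure :: "'v set \<Rightarrow> ('v \<Rightarrow> 'v \<Rightarrow> bool) \<Rightarrow> ('v \<Rightarrow> 'v \<Rightarrow> bool) \<Rightarrow> bool" where
  "superstructure V E D \<longleftrightarrow> (\<forall>u v. E u v \<longrightarrow> u \<in> V \<and> v \<in> V \<and> u \<noteq> v) \<and>
     (\<forall>u v. E u v \<longleftrightarrow> E v u) \<and> (\<forall>u v. dag_adj D u v \<longrightarrow> E u v)"

definition out_boundary :: "'v set \<Rightarrow> ('v \<Rightarrow> 'v \<Rightarrow> bool) \<Rightarrow> 'v set \<Rightarrow> 'v set" where
  "out_boundary V E S = {v \<in> V - S. \<exists>u\<in>S. E u v}"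

definition causal_partition ::
  "'v set \<Rightarrow> ('v \<Rightarrow> 'v \<Rightarrow> bool) \<Rightarrow> ('v \<Rightarrow> 'v \<Rightarrow> bool) \<Rightarrow> nat \<Rightarrow> (nat \<Rightarrow> 'v set) \<Rightarrow> bool" where
  "causal_partition V E D N S' \<longleftrightarrow>
     (\<forall>A. consistent_pag_learner V D A \<longrightarrow>
        (\<forall>u v. E u v \<longrightarrow> (\<exists>i<N. u \<in> S' i \<and> v \<in> S' i)) \<and>
        (\<forall>u v. \<not> dag_adj D u v \<and> E u v \<longrightarrow>
            (\<exists>i<N. u \<in> S' i \<and> v \<in> S' i \<and> A (S' i) u v = None)) \<and>
        (\<forall>u v w. D u v \<and> D w v \<and> u \<noteq> w \<and> \<not> dag_adj D u w \<longrightarrow>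
            (\<exists>i<N. u \<in> S' i \<and> v \<in> S' i \<and> w \<in> S' i)))"

end

theory Submission
  imports Defs
begin

lemma ind_first:
  assumes dag: "dag V D" and ss: "superstructure V E D"
    and nadj: "\<not> dag_adj D u v"
    and ip: "dag_inducing_path V D (V - T) u v p"
    and mem: "\<And>x. x \<in> V \<Longrightarrow> E u x \<Longrightarrow> x \<in> T"
  shows "\<exists>x. D u x \<and> D\<^sup>*\<^sup>* x v"
proof -
  have path: "is_path (dag_adj D) u v p" and sub: "set p \<subseteq> V"
    and ind: "\<And>i. 0 < i \<Longrightarrow> Suc i < length p \<Longrightarrow> p ! i \<notin> V - T \<Longrightarrow>
        dag_collider D p i \<and> (dag_anc D (p ! i) u \<or> dag_anc D (p ! i) v)"
    using ip unfolding dag_inducing_path_def by auto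
  have len: "length p \<ge> 2" and hd: "hd p = u" and lst: "last p = v"
    and adj: "\<And>i. Suc i < length p \<Longrightarrow> dag_adj D (p ! i) (p ! Suc i)"
    using path unfolding is_path_def by auto
  have p0: "p ! 0 = u" using hd len by (cases p) auto
  have pne: "p \<noteq> []" using len by auto
  have pl: "p ! (length p - 1) = v" using lst pne by (simp add: last_conv_nth)
  have len3: "length p \<ge> 3"
  proof (rule ccontr)
    assume "\<not> ?thesis"
    then have "length p = 2" using len by auto
    then show False using adj[of 0] p0 pl nadj by auto
  qed
  have a1: "dag_adj D u (p ! 1)" using adj[of 0] p0 len3 by auto
  have "p ! 1 \<in> V" using sub len3 by auto
  moreover have "E u (p ! 1)" using a1 ss unfolding superstructure_def by blast
  ultimately have "p ! 1 \<in> T" using mem by blast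
  then have c: "dag_collider D p 1 \<and> (dag_anc D (p ! 1) u \<or> dag_anc D (p ! 1) v)"
    using ind[of 1] len3 by auto
  then have d: "D u (p ! 1)" using p0 unfolding dag_collider_def by auto
  have "\<not> dag_anc D (p ! 1) u"
  proof
    assume "dag_anc D (p ! 1) u"
    then have "D\<^sup>*\<^sup>* (p ! 1) u" unfolding dag_anc_def .
    then have "D\<^sup>+\<^sup>+ u u" using d by (meson rtranclp_into_tranclp2)
    then show False using dag unfolding dag_def by blast
  qed
  then show ?thesis using c d unfolding dag_anc_def by blast
qed

lemma ind_last:
  assumes dag: "dag V D" and ss: "superstructure V E D"
    and nadj: "\<not> dag_adj D u v"
    and ip: "dag_inducing_path V D (V - T) u v p"
    and mem: "\<And>x. x \<in> V \<Longrightarrow> E v x \<Longrightarrow> x \<in> T"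
  shows "\<exists>x. D v x \<and> D\<^sup>*\<^sup>* x u"
proof -
  have path: "is_path (dag_adj D) u v p" and sub: "set p \<subseteq> V"
    and ind: "\<And>i. 0 < i \<Longrightarrow> Suc i < length p \<Longrightarrow> p ! i \<notin> V - T \<Longrightarrow>
        dag_collider D p i \<and> (dag_anc D (p ! i) u \<or> dag_anc D (p ! i) v)"
    using ip unfolding dag_inducing_path_def by auto
  have len: "length p \<ge> 2" and hd: "hd p = u" and lst: "last p = v"
    and adj: "\<And>i. Suc i < length p \<Longrightarrow> dag_adj D (p ! i) (p ! Suc i)"
    using path unfolding is_path_def by auto
  have p0: "p ! 0 = u" using hd len by (cases p) auto
  have pne: "p \<noteq> []" using len by auto
  have pl: "p ! (length p - 1) = v" using lst pne by (simp add: last_conv_nth)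
  have len3: "length p \<ge> 3"
  proof (rule ccontr)
    assume "\<not> ?thesis"
    then have "length p = 2" using len by auto
    then show False using adj[of 0] p0 pl nadj by auto
  qed
  define k where "k = length p - 2"
  have sk: "Suc k = length p - 1" using len3 unfolding k_def by auto
  have a1: "dag_adj D (p ! k) v" using adj[of k] pl sk len3 by auto
  have "p ! k \<in> V" using sub len3 unfolding k_def by auto
  moreover have "E v (p ! k)" using a1 ss unfolding superstructure_def dag_adj_def by blast
  ultimately have "p ! k \<in> T" using mem by blast
  then have c: "dag_collider D p k \<and> (dag_anc D (p ! k) u \<or> dag_anc D (p ! k) v)"
    using ind[of k] len3 sk unfolding k_def by auto
  then have d: "D v (p ! k)" using pl sk unfolding dag_collider_def by auto
  have "\<not> dag_anc D (p ! k) v"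
  proof
    assume "dag_anc D (p ! k) v"
    then have "D\<^sup>*\<^sup>* (p ! k) v" unfolding dag_anc_def .
    then have "D\<^sup>+\<^sup>+ v v" using d by (meson rtranclp_into_tranclp2)
    then show False using dag unfolding dag_def by blast
  qed
  then show ?thesis using c d unfolding dag_anc_def by blast
qed

lemma pag_none: "pag S M u v = None \<longleftrightarrow> M u v = None"
  unfolding pag_def by (auto split: option.splits)

theorem lemma2:
  fixes V :: "'v set" and D E :: "'v \<Rightarrow> 'v \<Rightarrow> bool"
    and N :: nat and S :: "nat \<Rightarrow> 'v set"
  assumes "dag V D"
    and "superstructure V E D"
    and "\<forall>i<N. S i \<subseteq> V"
    and "(\<Union>i<N. S i) = V"
  shows "causal_partition V E D N (\<lambda>i. S i \<union> out_boundary V E (S i))"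
proof -
  have EV: "\<And>u v. E u v \<Longrightarrow> u \<in> V \<and> v \<in> V" and Es: "\<And>u v. E u v \<Longrightarrow> E v u"
    and DE: "\<And>u v. dag_adj D u v \<Longrightarrow> E u v"
    using assms(2) unfolding superstructure_def by blast+
  have cov: "\<And>x. x \<in> V \<Longrightarrow> \<exists>i<N. x \<in> S i" using assms(4) by blast
  have inS: "\<And>i x y. x \<in> S i \<Longrightarrow> E x y \<Longrightarrow> y \<in> S i \<union> out_boundary V E (S i)"
    unfolding out_boundary_def using EV by blast
  have subV: "\<And>i. i < N \<Longrightarrow> S i \<union> out_boundary V E (S i) \<subseteq> V"
    using assms(3) unfolding out_boundary_def by blast
  show ?thesis unfolding causal_partition_def
  proof (rule allI, rule impI, intro conjI)
    fix A
    assume A: "consistent_pag_learner V D A"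
    show "\<forall>u v. E u v \<longrightarrow> (\<exists>i<N. u \<in> S i \<union> out_boundary V E (S i) \<and> v \<in> S i \<union> out_boundary V E (S i))"
    proof (intro allI impI)
      fix u v assume e: "E u v"
      then obtain i where "i < N" "u \<in> S i" using cov EV by blast
      moreover have "v \<in> S i \<union> out_boundary V E (S i)" using inS[OF calculation(2) e] .
      ultimately show "\<exists>i<N. u \<in> S i \<union> out_boundary V E (S i) \<and> v \<in> S i \<union> out_boundary V E (S i)"
        by blast
    qed
    show "\<forall>u v w. D u v \<and> D w v \<and> u \<noteq> w \<and> \<not> dag_adj D u w \<longrightarrow>
        (\<exists>i<N. u \<in> S i \<union> out_boundary V E (S i) \<and> v \<in> S i \<union> out_boundary V E (S i)
           \<and> w \<in> S i \<union> out_boundary V E (S i))"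
    proof (intro allI impI)
      fix u v w assume h: "D u v \<and> D w v \<and> u \<noteq> w \<and> \<not> dag_adj D u w"
      then have e1: "E v u" "E v w" using DE Es unfolding dag_adj_def by blast+
      obtain i where i: "i < N" "v \<in> S i" using cov EV e1 by blast
      have "u \<in> S i \<union> out_boundary V E (S i)" "w \<in> S i \<union> out_boundary V E (S i)"
        using inS[OF i(2) e1(1)] inS[OF i(2) e1(2)] .
      then show "\<exists>i<N. u \<in> S i \<union> out_boundary V E (S i) \<and> v \<in> S i \<union> out_boundary V E (S i)
           \<and> w \<in> S i \<union> out_boundary V E (S i)" using i by blast
    qed
    show "\<forall>u v. \<not> dag_adj D u v \<and> E u v \<longrightarrow>
        (\<exists>i<N. u \<in> S i \<union> out_boundary V E (S i) \<and> v \<in> S i \<union> out_boundary V E (S i)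
           \<and> A (S i \<union> out_boundary V E (S i)) u v = None)"
    proof (intro allI impI)
      fix u v assume h: "\<not> dag_adj D u v \<and> E u v"
      define T where "T = (\<lambda>i. S i \<union> out_boundary V E (S i))"
      have AT: "A (T i) u v = None \<longleftrightarrow> latent_mag V D (T i) u v = None" if "i < N" for i
      proof -
        have "A (T i) = pag (T i) (latent_mag V D (T i))"
          using A subV[OF that] unfolding consistent_pag_learner_def T_def by blast
        then show ?thesis using pag_none by simp
      qed
      have uvV: "u \<in> V" "v \<in> V" using EV h by blast+
      obtain i where i: "i < N" "u \<in> S i" using cov[OF uvV(1)] by blast
      obtain j where j: "j < N" "v \<in> S j" using cov[OF uvV(2)] by blast
      have Euv: "E u v" "E v u" using h Es by blast+
      have ui: "u \<in> T i" "v \<in> T i" using i(2) inS[OF i(2) Euv(1)] unfolding T_def by simp_all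
      have vj: "u \<in> T j" "v \<in> T j" using j(2) inS[OF j(2) Euv(2)] unfolding T_def by simp_all
      have mi: "\<And>x. x \<in> V \<Longrightarrow> E u x \<Longrightarrow> x \<in> T i" using inS[OF i(2)] unfolding T_def by simp
      have mj: "\<And>x. x \<in> V \<Longrightarrow> E v x \<Longrightarrow> x \<in> T j" using inS[OF j(2)] unfolding T_def by simp
      show "\<exists>i<N. u \<in> S i \<union> out_boundary V E (S i) \<and> v \<in> S i \<union> out_boundary V E (S i)
           \<and> A (S i \<union> out_boundary V E (S i)) u v = None"
      proof (rule ccontr)
        assume nc: "\<not> ?thesis"
        have "A (T i) u v \<noteq> None" using nc i(1) ui unfolding T_def by fastforce
        then have "latent_mag V D (T i) u v \<noteq> None" using AT i by simp
        then obtain p where p: "dag_inducing_path V D (V - T i) u v p"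
          unfolding latent_mag_def by (auto split: if_splits)
        obtain x where x: "D u x" "D\<^sup>*\<^sup>* x v"
          using ind_first[OF assms(1) assms(2) _ p mi] h by blast
        have "A (T j) u v \<noteq> None" using nc j(1) vj unfolding T_def by fastforce
        then have "latent_mag V D (T j) u v \<noteq> None" using AT j by simp
        then obtain q where q: "dag_inducing_path V D (V - T j) u v q"
          unfolding latent_mag_def by (auto split: if_splits)
        obtain y where y: "D v y" "D\<^sup>*\<^sup>* y u"
          using ind_last[OF assms(1) assms(2) _ q mj] h by blast
        have "D\<^sup>*\<^sup>* x u" using x(2) y by (meson converse_rtranclp_into_rtranclp rtranclp_trans)
        then have "D\<^sup>+\<^sup>+ u u" using x(1) by (meson rtranclp_into_tranclp2)
        then show False using assms(1) unfolding dag_def by blast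
      qed
    qed
  qed
qed

end
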